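(* Let $0<\gamma<\frac12$, $0\le\delta\le1$, and let $m\ge2$ be an integer. Then $$F(1,\gamma,\delta)+F(m+1,\gamma)<F(2,\gamma)+F(m,\gamma).$$
   Context: Logarithms base 2; $h$ is binary entropy; $\|u\|$ is Hamming weight. For real $m\ge2$ and $\gamma\in(0,\frac12)$, $F(m,\gamma)=\min_{x\in(0,1)}\big[\log((1+x)^m+(1-x)^m)-m\gamma\log x-1\big]$. For an integer $m\ge1$, $\gamma\in(0,\frac12)$, $\delta\in[0,1]$, let $H^*(m,\gamma,\delta)$ be the maximum entropy of a probability distribution $Q$ on $\mathbb{F}_2^m$ with $\Pr_{u\sim Q}(u_i=1)=\gamma$ for all $i$ and $\Pr_{u\sim Q}(\|u\|\text{ odd})=\delta$; $F(m,\gamma,\delta)=H^*(m,\gamma,\delta)-h(\delta)$ if such $Q$ exists, and $-\infty$ otherwise. *)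

theory Defs
  imports "HOL-Analysis.Analysis" "HOL-Library.Extended_Real"
begin

definition xlogx :: "real \<Rightarrow> real" where
  "xlogx p = (if p = 0 then 0 else p * log 2 p)"

definition bin_entropy :: "real \<Rightarrow> real" where
  "bin_entropy d = - xlogx d - xlogx (1 - d)"

text \<open>Two-argument F(m,gamma) = min over x in (0,1) (written as an infimum).\<close>
definition F2 :: "real \<Rightarrow> real \<Rightarrow> real" where
  "F2 m g = Inf ((\<lambda>x. log 2 ((1 + x) powr m + (1 - x) powr m) - m * g * log 2 x - 1)
                 ` {0<..<1})"

text \<open>Vectors u in F_2^m are represented by their supports S \<subseteq> {..<m};
  u_i = 1 iff i \<in> S, and the Hamming weight is card S.\<close>
definition is_distr :: "nat \<Rightarrow> (nat set \<Rightarrow> real) \<Rightarrow> bool" where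
  "is_distr m Q \<longleftrightarrow> (\<forall>S\<in>Pow {..<m}. Q S \<ge> 0) \<and> (\<Sum>S\<in>Pow {..<m}. Q S) = 1"

definition entropy_distr :: "nat \<Rightarrow> (nat set \<Rightarrow> real) \<Rightarrow> real" where
  "entropy_distr m Q = - (\<Sum>S\<in>Pow {..<m}. xlogx (Q S))"

definition feasible :: "nat \<Rightarrow> real \<Rightarrow> real \<Rightarrow> (nat set \<Rightarrow> real) \<Rightarrow> bool" where
  "feasible m g d Q \<longleftrightarrow> is_distr m Q
     \<and> (\<forall>i<m. (\<Sum>S\<in>{S\<in>Pow {..<m}. i \<in> S}. Q S) = g)
     \<and> (\<Sum>S\<in>{S\<in>Pow {..<m}. odd (card S)}. Q S) = d"

text \<open>H*(m,gamma,delta): maximum entropy over feasible distributions (a compact set,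
  so the supremum is attained whenever it is nonempty).\<close>
definition Hstar :: "nat \<Rightarrow> real \<Rightarrow> real \<Rightarrow> real" where
  "Hstar m g d = Sup (entropy_distr m ` {Q. feasible m g d Q})"

definition F3 :: "nat \<Rightarrow> real \<Rightarrow> real \<Rightarrow> ereal" where
  "F3 m g d = (if \<exists>Q. feasible m g d Q then ereal (Hstar m g d - bin_entropy d) else -\<infinity>)"

end

theory Submission
  imports Defs
begin

definition psi :: "real \<Rightarrow> real \<Rightarrow> real" where
  "psi g s = -(1-g)*ln((1+s)/(2*(1-g))) - g*ln((1-s)/(2*g))"

definition KK :: "real \<Rightarrow> nat \<Rightarrow> real \<Rightarrow> real" where
  "KK g m s = ln (1 + s^m) + real m * psi g s"

definition Hn :: "real \<Rightarrow> real" where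
  "Hn g = -(g*ln g + (1-g)*ln(1-g))"

lemma ln_gibbs: fixes t::real assumes "0 < t" shows "ln t \<le> t - 1"
  by (rule ln_le_minus_one[OF assms])

lemma psi_nonneg:
  assumes g: "0<g" "g<1" and s: "0<s" "s<1"
  shows "psi g s \<ge> 0"
proof -
  have a: "ln((1+s)/(2*(1-g))) \<le> (1+s)/(2*(1-g)) - 1" using g s by (intro ln_gibbs) auto
  have b: "ln((1-s)/(2*g)) \<le> (1-s)/(2*g) - 1" using g s by (intro ln_gibbs) auto
  have "(1-g)*ln((1+s)/(2*(1-g))) + g*ln((1-s)/(2*g)) \<le> (1-g)*((1+s)/(2*(1-g)) - 1) + g*((1-s)/(2*g) - 1)"
    using a b g by (intro add_mono mult_left_mono) auto
  also have "\<dots> = 0" using g by (simp add: field_simps)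
  finally show ?thesis unfolding psi_def by linarith
qed

lemma psi_s0:
  assumes g: "0<g" "g<1"
  shows "psi g (1-2*g) = 0"
proof -
  have "(1+(1-2*g))/(2*(1-g)) = 1" "(1-(1-2*g))/(2*g) = 1" using g by (auto simp: field_simps)
  thus ?thesis unfolding psi_def by simp
qed

lemma KK_ge: assumes "0<g" "g<1" "0<s" "s<1" shows "KK g m s \<ge> ln (1 + s^m)"
  using psi_nonneg[OF assms] unfolding KK_def by simp

lemma gibbs2:
  assumes g: "0<g" "g<1" and y: "0<y"
  shows "ln (1+y) - g * ln y \<ge> Hn g"
proof -
  have a: "ln(1/((1-g)*(1+y))) \<le> 1/((1-g)*(1+y)) - 1" using g y by (intro ln_gibbs) auto
  have b: "ln(y/(g*(1+y))) \<le> y/(g*(1+y)) - 1" using g y by (intro ln_gibbs) auto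
  have "(1-g)*ln(1/((1-g)*(1+y))) + g*ln(y/(g*(1+y))) \<le> (1-g)*(1/((1-g)*(1+y)) - 1) + g*(y/(g*(1+y)) - 1)"
    using a b g by (intro add_mono mult_left_mono) auto
  also have "\<dots> = 0"
  proof -
    have "(1-g)*(1/((1-g)*(1+y))) = 1/(1+y)" "g*(y/(g*(1+y))) = y/(1+y)" using g y by auto
    moreover have "1/(1+y) + y/(1+y) = 1" using y by (simp add: field_simps)
    ultimately show ?thesis by (simp add: algebra_simps)
  qed
  finally have 1: "(1-g)*ln(1/((1-g)*(1+y))) + g*ln(y/(g*(1+y))) \<le> 0" .
  have 2: "ln(1/((1-g)*(1+y))) = - ln (1-g) - ln (1+y)" using g y by (simp add: ln_div ln_mult)
  have 3: "ln(y/(g*(1+y))) = ln y - ln g - ln (1+y)" using g y by (simp add: ln_div ln_mult)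
  have "(1-g)*(- ln (1-g) - ln (1+y)) + g*(ln y - ln g - ln (1+y)) \<le> 0" using 1 unfolding 2 3 .
  thus ?thesis unfolding Hn_def by (simp add: algebra_simps)
qed

lemma psi_x:
  assumes g: "0<g" "g<1" and x: "0<x" "x<1"
  shows "psi g ((1-x)/(1+x)) = ln (1+x) - g * ln x - Hn g"
proof -
  have "1+(1-x)/(1+x) = 2/(1+x)" using x by (simp add: field_simps)
  moreover have "2/(1+x)/(2*(1-g)) = 1/((1+x)*(1-g))"
    using g x by (simp add: frac_eq_eq)
  ultimately have 1: "(1+(1-x)/(1+x))/(2*(1-g)) = 1/((1+x)*(1-g))" by simp
  have "1-(1-x)/(1+x) = 2*x/(1+x)" using x by (simp add: field_simps)
  moreover have "2*x/(1+x)/(2*g) = x/((1+x)*g)" using g x by (simp add: frac_eq_eq)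
  ultimately have 2: "(1-(1-x)/(1+x))/(2*g) = x/((1+x)*g)" by simp
  have 3: "ln (1/((1+x)*(1-g))) = - ln (1+x) - ln (1-g)" using g x by (simp add: ln_div ln_mult)
  have 4: "ln (x/((1+x)*g)) = ln x - ln (1+x) - ln g" using g x by (simp add: ln_div ln_mult)
  show ?thesis unfolding psi_def 1 2 3 4 Hn_def by (simp add: algebra_simps)
qed

lemma val_eq:
  assumes g: "0<g" "g<1" and x: "0<x" "x<1"
  shows "log 2 ((1+x) powr real n + (1-x) powr real n) - real n * g * log 2 x - 1
     = (KK g n ((1-x)/(1+x)) + real n * Hn g - ln 2)/ln 2"
proof -
  have p: "(1+x) powr real n = (1+x)^n" "(1-x) powr real n = (1-x)^n" using x by (auto simp: powr_realpow)
  have e1: "(1+x)^n + (1-x)^n = (1+x)^n * (1 + ((1-x)/(1+x))^n)" using x by (simp add: power_divide field_simps)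
  have pos: "0 < 1 + ((1-x)/(1+x))^n" using x by (simp add: add_pos_nonneg)
  have l1: "ln ((1+x)^n + (1-x)^n) = real n * ln (1+x) + ln (1 + ((1-x)/(1+x))^n)"
    unfolding e1 using x pos by (simp add: ln_mult ln_realpow)
  have "log 2 ((1+x)^n + (1-x)^n) - real n * g * log 2 x - 1
     = (ln ((1+x)^n + (1-x)^n) - real n * g * ln x - ln 2)/ln 2"
    by (simp add: log_def field_simps)
  also have "\<dots> = (KK g n ((1-x)/(1+x)) + real n * Hn g - ln 2)/ln 2"
    unfolding l1 KK_def psi_x[OF g x] by (simp add: algebra_simps)
  finally show ?thesis unfolding p .
qed

definition sc :: "real \<Rightarrow> real" where
  "sc g = (sqrt(1-g) - sqrt g)/(sqrt(1-g) + sqrt g)"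

lemma sc_props:
  assumes g: "0<g" "g<1/2"
  shows "0 < sc g" "sc g < 1" "sc g \<le> 1 - 2*g"
proof -
  define a where "a = sqrt g"
  define b where "b = sqrt (1-g)"
  have a: "0<a" "a^2 = g" using g unfolding a_def by auto
  have b: "0<b" "b^2 = 1-g" using g unfolding b_def by auto
  have ab: "a < b" unfolding a_def b_def using g by (simp add: real_sqrt_less_iff)
  have sc: "sc g = (b-a)/(b+a)" unfolding sc_def a_def b_def ..
  show "0 < sc g" unfolding sc using a b ab by simp
  show "sc g < 1" unfolding sc using a b ab by simp
  have "(b-a) \<le> (b-a)*(b+a)^2"
  proof -
    have "(b+a)^2 = 1 + 2*a*b" using a b by (simp add: power2_eq_square algebra_simps)
    hence "(b+a)^2 \<ge> 1" using a b by simp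
    thus ?thesis using ab by (simp add: mult_le_cancel_left1)
  qed
  moreover have "1 - 2*g = (b-a)*(b+a)" using a b by (simp add: power2_eq_square algebra_simps)
  moreover have "(b-a)/(b+a) \<le> (b-a)*(b+a)"
  proof -
    have "0 < b+a" using a b by simp
    moreover have "b-a \<le> ((b-a)*(b+a))*(b+a)" using \<open>(b-a) \<le> (b-a)*(b+a)^2\<close>
      by (simp add: power2_eq_square mult.assoc)
    ultimately show ?thesis by (simp add: divide_le_eq)
  qed
  ultimately show "sc g \<le> 1 - 2*g" unfolding sc by simp
qed

lemma sc_ge:
  assumes g: "0<g" "g<1/2" and s: "sc g \<le> s" "s < 1"
  shows "(1-g)*(1-s)^2 \<le> g*(1+s)^2"
proof -
  define a where "a = sqrt g"
  define b where "b = sqrt (1-g)"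
  have a: "0<a" "a^2 = g" using g unfolding a_def by auto
  have b: "0<b" "b^2 = 1-g" using g unfolding b_def by auto
  have sc: "sc g = (b-a)/(b+a)" unfolding sc_def a_def b_def ..
  have "b - a \<le> s*(b+a)" using s a b unfolding sc by (simp add: divide_le_eq)
  hence "b*(1-s) \<le> a*(1+s)" by (simp add: algebra_simps)
  moreover have "0 \<le> b*(1-s)" using b s by simp
  ultimately have "(b*(1-s))^2 \<le> (a*(1+s))^2" by (rule power_mono)
  thus ?thesis using a b by (simp add: power_mult_distrib)
qed

lemma sc_le:
  assumes g: "0<g" "g<1/2" and s: "0 < s" "s \<le> sc g"
  shows "g*(1+s)^2 \<le> (1-g)*(1-s)^2"
proof -
  define a where "a = sqrt g"
  define b where "b = sqrt (1-g)"
  have a: "0<a" "a^2 = g" using g unfolding a_def by auto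
  have b: "0<b" "b^2 = 1-g" using g unfolding b_def by auto
  have sc: "sc g = (b-a)/(b+a)" unfolding sc_def a_def b_def ..
  have "s*(b+a) \<le> b - a" using s a b unfolding sc by (simp add: le_divide_eq)
  hence "a*(1+s) \<le> b*(1-s)" by (simp add: algebra_simps)
  moreover have "0 \<le> a*(1+s)" using a s by simp
  ultimately have "(a*(1+s))^2 \<le> (b*(1-s))^2" by (rule power_mono)
  thus ?thesis using a b by (simp add: power_mult_distrib)
qed

lemma conv_lse: "convex_on UNIV (\<lambda>z::real. ln (1 + exp z))"
proof (rule convex_on_realI[where f'="\<lambda>z. exp z/(1+exp z)"])
  fix x :: real
  show "((\<lambda>z. ln (1 + exp z)) has_real_derivative exp x / (1 + exp x)) (at x)"
    by (auto intro!: derivative_eq_intros simp: add_pos_pos)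
next
  fix x y :: real assume "x \<le> y"
  hence "exp x \<le> exp y" by simp
  thus "exp x / (1 + exp x) \<le> exp y / (1 + exp y)"
    by (simp add: divide_simps add_pos_pos algebra_simps)
qed auto

definition phi :: "real \<Rightarrow> real \<Rightarrow> real" where
  "phi g s = -(1-g) * s/(1+s) + g * s/(1-s)"

lemma phi_deriv:
  assumes "0 < x" "x < 1"
  shows "(phi g has_real_derivative (-(1-g)/(1+x)^2 + g/(1-x)^2)) (at x)"
proof -
  have d1: "((\<lambda>s. s/(1+s)) has_real_derivative 1/(1+x)^2) (at x)"
    by (rule DERIV_cong[OF DERIV_quotient[OF DERIV_ident DERIV_add[OF DERIV_const DERIV_ident]]])
       (use assms in \<open>auto simp: power2_eq_square\<close>)
  have d2: "((\<lambda>s. s/(1-s)) has_real_derivative 1/(1-x)^2) (at x)"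
    by (rule DERIV_cong[OF DERIV_quotient[OF DERIV_ident DERIV_diff[OF DERIV_const DERIV_ident]]])
       (use assms in \<open>auto simp: power2_eq_square\<close>)
  have e: "phi g = (\<lambda>s. (-(1-g)) * (s/(1+s)) + g * (s/(1-s)))"
    unfolding phi_def by (rule ext) simp
  show ?thesis unfolding e
    by (rule DERIV_cong[OF DERIV_add[OF DERIV_cmult[OF d1] DERIV_cmult[OF d2]]]) simp
qed

lemma phi_mono:
  assumes g: "0<g" "g<1/2" and s: "sc g \<le> s1" "s1 \<le> s2" "s2 < 1"
  shows "phi g s1 \<le> phi g s2"
proof (rule DERIV_nonneg_imp_nondecreasing[OF s(2)])
  fix x assume x: "s1 \<le> x" "x \<le> s2"
  have x01: "0 < x" "x < 1" using x s sc_props[OF g] by auto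
  have "(1-g)*(1-x)^2 \<le> g*(1+x)^2" using sc_ge[OF g, of x] x s by auto
  hence "(1-g)/(1+x)^2 \<le> g/(1-x)^2" using x01 g by (simp add: frac_le_eq divide_simps)
  moreover have "-(1-g)/(1+x)^2 = - ((1-g)/(1+x)^2)" by (simp only: minus_divide_left)
  ultimately have "0 \<le> -(1-g)/(1+x)^2 + g/(1-x)^2" by linarith
  thus "\<exists>y. DERIV (phi g) x :> y \<and> 0 \<le> y"
    using phi_deriv[OF x01, of g] by blast
qed

lemma psi_deriv:
  assumes g: "0<g" "g<1" and s: "0 < s" "s < 1"
  shows "(psi g has_real_derivative (-(1-g)/(1+s) + g/(1-s))) (at s)"
proof -
  have e: "psi g = (\<lambda>s. -(1-g)*ln((1+s)/(2*(1-g))) - g*ln((1-s)/(2*g)))"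
    unfolding psi_def by (rule ext) simp
  show ?thesis unfolding e
    by (rule DERIV_cong, (rule derivative_eq_intros refl | use g s in simp)+)
qed

lemma chi_deriv:
  assumes g: "0<g" "g<1" and u: "u < 0"
  shows "((\<lambda>u. psi g (exp u)) has_real_derivative phi g (exp u)) (at u)"
proof -
  have s: "0 < exp u" "exp u < 1" using u by auto
  have "((psi g \<circ> exp) has_real_derivative (-(1-g)/(1+exp u) + g/(1-exp u)) * exp u) (at u)"
    by (rule DERIV_chain[OF psi_deriv[OF g s] DERIV_exp])
  moreover have "(-(1-g)/(1+exp u) + g/(1-exp u)) * exp u = phi g (exp u)"
    unfolding phi_def by (simp add: algebra_simps)
  ultimately show ?thesis by (simp add: o_def)
qed

lemma chi_convex:
  assumes g: "0<g" "g<1/2"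
  shows "convex_on {ln (sc g)..<0} (\<lambda>u. psi g (exp u))"
proof (rule convex_on_realI[where f'="\<lambda>u. phi g (exp u)"])
  fix x assume "x \<in> {ln (sc g)..<0}"
  thus "((\<lambda>u. psi g (exp u)) has_real_derivative phi g (exp x)) (at x)"
    using chi_deriv[of g x] g by auto
next
  fix x y assume x: "x \<in> {ln (sc g)..<0}" and y: "y \<in> {ln (sc g)..<0}" and xy: "x \<le> y"
  have scp: "0 < sc g" using sc_props[OF g] by auto
  have "sc g \<le> exp x" using x scp by (metis atLeastLessThan_iff exp_ln exp_le_cancel_iff)
  moreover have "exp x \<le> exp y" using xy by simp
  moreover have "exp y < 1" using y by simp
  ultimately show "phi g (exp x) \<le> phi g (exp y)" by (rule phi_mono[OF g])
qed auto

lemma lnpow_deriv: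
  assumes "0 < x"
  shows "((\<lambda>s. ln (1 + s^n)) has_real_derivative (real n * x^(n-1))/(1+x^n)) (at x)"
proof -
  have p: "0 < 1 + x^n" using assms by (simp add: add_pos_nonneg)
  have d: "DERIV (\<lambda>s. 1 + s^n) x :> 0 + real n * x^(n-1)"
  proof -
    have dp: "DERIV (\<lambda>s. s^n) x :> real n * x^(n-1)" using DERIV_pow[of n x] by simp
    show ?thesis by (intro DERIV_add DERIV_const dp)
  qed
  show ?thesis
    by (rule DERIV_cong[OF DERIV_chain2[OF DERIV_ln_divide[OF p] d]]) simp
qed

lemma pow_ratio_le:
  assumes n: "2 \<le> n" and x: "0 < x" "x \<le> (1::real)"
  shows "x^(n-1)/(1+x^n) \<le> x/(1+x^2)"
proof -
  have a: "x^(n-1) \<le> x^1" using n x by (intro power_decreasing) auto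
  have b: "x^(n-1) * x^2 = x * x^n"
  proof -
    have "x^(n-1) * x^2 = x^(n-1+2)" by (simp only: power_add)
    also have "n-1+2 = Suc n" using n by simp
    finally show ?thesis by simp
  qed
  have "x^(n-1)*(1+x^2) \<le> x*(1+x^n)" using a b by (simp add: algebra_simps)
  thus ?thesis using x by (simp add: divide_simps add_pos_nonneg)
qed

lemma rat_le:
  fixes g x :: real
  assumes g: "0<g" "g<1/2" and x: "0 < x" "x < 1" and c: "g*(1+x)^2 \<le> (1-g)*(1-x)^2"
  shows "x/(1+x^2) \<le> (1-g)/(1+x) - g/(1-x)"
proof -
  have id: "((1-g)*(1-x) - g*(1+x))*(1+x^2) - x*((1+x)*(1-x)) = (1-g)*(1-x)^2 - g*(1+x)^2"
    by algebra
  have "x*((1+x)*(1-x)) \<le> ((1-g)*(1-x) - g*(1+x))*(1+x^2)" using id c by linarith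
  moreover have "(1-g)/(1+x) - g/(1-x) = ((1-g)*(1-x) - g*(1+x))/((1+x)*(1-x))"
    using x by (simp add: field_simps)
  moreover have "0 < (1+x)*(1-x)" "0 < 1+x^2" using x by (auto intro: add_pos_nonneg)
  moreover have "\<And>N D E::real. 0 < D \<Longrightarrow> 0 < E \<Longrightarrow> x*D \<le> N*E \<Longrightarrow> x/E \<le> N/D"
    by (simp add: divide_simps mult.commute)
  ultimately show ?thesis by metis
qed

lemma KK_mono:
  assumes g: "0<g" "g<1/2" and n: "2 \<le> n" and s: "0 < s" "s \<le> sc g"
  shows "KK g n (sc g) \<le> KK g n s"
proof (rule DERIV_nonpos_imp_nonincreasing[OF s(2)])
  fix x assume x: "s \<le> x" "x \<le> sc g"
  have x01: "0 < x" "x < 1" using x s sc_props[OF g] by auto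
  have e: "KK g n = (\<lambda>s. ln (1 + s^n) + real n * psi g s)" unfolding KK_def by (rule ext) simp
  have d: "DERIV (KK g n) x :> (real n * x^(n-1))/(1+x^n) + real n * (-(1-g)/(1+x) + g/(1-x))"
    unfolding e using g x01 by (intro DERIV_add lnpow_deriv DERIV_cmult psi_deriv) auto
  have c: "g*(1+x)^2 \<le> (1-g)*(1-x)^2" using sc_le[OF g, of x] x01 x by auto
  have "x^(n-1)/(1+x^n) \<le> (1-g)/(1+x) - g/(1-x)"
    using pow_ratio_le[OF n, of x] rat_le[OF g x01 c] x01 by linarith
  hence "x^(n-1)/(1+x^n) + (-(1-g)/(1+x) + g/(1-x)) \<le> 0"
    by (simp only: minus_divide_left[symmetric])
  hence "real n * (x^(n-1)/(1+x^n) + (-(1-g)/(1+x) + g/(1-x))) \<le> 0"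
    by (simp add: mult_nonneg_nonpos)
  hence "(real n * x^(n-1))/(1+x^n) + real n * (-(1-g)/(1+x) + g/(1-x)) \<le> 0"
    by (simp add: algebra_simps)
  thus "\<exists>y. DERIV (KK g n) x :> y \<and> y \<le> 0" using d by blast
qed

lemma step:
  assumes g: "0<g" "g<1/2" and m: "2 \<le> m" and M: "m + 2 \<le> M"
    and G: "\<And>t. 0 < t \<Longrightarrow> t < 1 \<Longrightarrow> Gm1 \<le> KK g (m+1) t"
    and s: "sc g \<le> s" "s < 1"
  shows "Gm1 \<le> (1 - 1/(real M - real m)) * KK g m s + (1/(real M - real m)) * ln (1 + (1-2*g)^M)"
proof -
  define l where "l = 1/(real M - real m)"
  define s0 where "s0 = 1 - 2*g"
  have scp: "0 < sc g" "sc g < 1" "sc g \<le> s0" using sc_props[OF g] unfolding s0_def by auto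
  have s0: "0 < s0" "s0 < 1" using g unfolding s0_def by auto
  have sp: "0 < s" using s scp by auto
  have Mm: "real M - real m \<ge> 2" using M by simp
  have l: "0 < l" "l \<le> 1/2" "l * (real M - real m) = 1" unfolding l_def using Mm by (auto simp: field_simps)
  define u1 where "u1 = ln s"
  define u2 where "u2 = ln s0"
  have u1: "u1 \<in> {ln (sc g)..<0}" unfolding u1_def using s sp scp by auto
  have u2: "u2 \<in> {ln (sc g)..<0}" unfolding u2_def using s0 scp by auto
  define mu where "mu = (1-l)*real m/(real m + 1)"
  have "(1-l)*real m \<le> 1 * real m" using l by (intro mult_right_mono) auto
  hence mu: "0 \<le> mu" "mu \<le> 1" unfolding mu_def using l by (auto simp: divide_le_eq)
  define t where "t = 1 - mu"
  have t: "0 \<le> t" "t \<le> 1" unfolding t_def using mu by auto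
  define u where "u = (1-t)*u1 + t*u2"
  have uneg: "u < 0"
  proof (cases "t = 0")
    case True thus ?thesis unfolding u_def using u1 by simp
  next
    case False
    hence "t*u2 < 0" using t u2 by (simp add: mult_pos_neg)
    moreover have "(1-t)*u1 \<le> 0" using t u1 by (simp add: mult_nonneg_nonpos)
    ultimately show ?thesis unfolding u_def by linarith
  qed
  define tt where "tt = exp u"
  have tt: "0 < tt" "tt < 1" unfolding tt_def using uneg by auto
  have c1: "psi g (exp u) \<le> (1-t) * psi g (exp u1) + t * psi g (exp u2)"
    using convex_onD[OF chi_convex[OF g] t u1 u2] unfolding u_def by simp
  have c1': "psi g tt \<le> mu * psi g s"
    using c1 psi_s0[of g] g sp s0 unfolding tt_def u1_def u2_def t_def s0_def by simp
  define a where "a = real m * u1"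
  define b where "b = real M * u2"
  have key: "real (m+1) * u = (1-l)*a + l*b"
  proof -
    have "real (m+1) * u = (real m + 1) * mu * u1 + (real m + 1) * (1 - mu) * u2"
      unfolding u_def t_def by (simp add: algebra_simps)
    also have "(real m + 1) * mu = (1-l) * real m" unfolding mu_def by simp
    also have "(real m + 1) * (1 - mu) = l * real M"
    proof -
      have "(real m + 1) * (1 - mu) = real m + 1 - (1-l)*real m" unfolding mu_def by (simp add: field_simps)
      also have "\<dots> = l * real M" using l(3) by (simp add: algebra_simps)
      finally show ?thesis .
    qed
    finally show ?thesis unfolding a_def b_def by (simp add: algebra_simps)
  qed
  have c2: "ln (1 + exp ((1-l)*a + l*b)) \<le> (1-l) * ln (1 + exp a) + l * ln (1 + exp b)"
    using convex_onD[OF conv_lse, of l a b] l by simp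
  have ea: "exp a = s^m" unfolding a_def u1_def using sp by (simp add: exp_of_nat_mult)
  have eb: "exp b = s0^M" unfolding b_def u2_def using s0 by (simp add: exp_of_nat_mult)
  have ett: "tt^(m+1) = exp ((1-l)*a + l*b)"
    unfolding tt_def key[symmetric] by (simp only: exp_of_nat_mult)
  have "Gm1 \<le> KK g (m+1) tt" using G tt by auto
  also have "\<dots> = ln (1 + tt^(m+1)) + (real m + 1) * psi g tt" unfolding KK_def by simp
  also have "\<dots> \<le> (1-l) * ln (1 + s^m) + l * ln (1 + s0^M) + (real m + 1) * (mu * psi g s)"
    using c2 c1' unfolding ett ea eb by (intro add_mono mult_left_mono) auto
  also have "(real m + 1) * (mu * psi g s) = (1-l) * (real m * psi g s)"
    unfolding mu_def by simp
  finally show ?thesis unfolding l_def[symmetric] s0_def[symmetric] KK_def by (simp add: algebra_simps)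
qed

lemma KK_nonneg: assumes "0<g" "g<1" "0<s" "s<1" shows "0 \<le> KK g n s"
proof -
  have "0 \<le> ln (1 + s^n)" using assms by simp
  thus ?thesis using KK_ge[OF assms, of n] by linarith
qed

lemma F2_lower:
  assumes "\<And>x. 0 < x \<Longrightarrow> x < 1 \<Longrightarrow> c \<le> log 2 ((1+x) powr m + (1-x) powr m) - m * g * log 2 x - 1"
  shows "c \<le> F2 m g"
  unfolding F2_def
proof (rule cInf_greatest)
  show "(\<lambda>x. log 2 ((1+x) powr m + (1-x) powr m) - m * g * log 2 x - 1) ` {0<..<1} \<noteq> {}" by auto
qed (use assms in auto)

lemma F2_upper:
  assumes g: "0<g" "g<1" and x: "0 < x" "x < 1"
  shows "F2 (real n) g \<le> (KK g n ((1-x)/(1+x)) + real n * Hn g - ln 2)/ln 2"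
proof -
  let ?f = "\<lambda>x. log 2 ((1+x) powr real n + (1-x) powr real n) - real n * g * log 2 x - 1"
  have bdd: "bdd_below (?f ` {0<..<1})"
  proof (rule bdd_belowI2[where m="(real n * Hn g - ln 2)/ln 2"])
    fix y :: real assume y: "y \<in> {0<..<1}"
    have s: "0 < (1-y)/(1+y)" "(1-y)/(1+y) < 1" using y by auto
    have e: "?f y = (KK g n ((1-y)/(1+y)) + real n * Hn g - ln 2)/ln 2"
      by (rule val_eq[OF g]) (use y in auto)
    show "(real n * Hn g - ln 2)/ln 2 \<le> ?f y"
      unfolding e using KK_nonneg[OF g s, of n] by (intro divide_right_mono) auto
  qed
  have "F2 (real n) g \<le> ?f x" unfolding F2_def by (rule cInf_lower) (use bdd x in auto)
  thus ?thesis using val_eq[OF g x, of n] by simp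
qed

lemma F2_two:
  assumes g: "0<g" "g<1"
  shows "Hn g / ln 2 \<le> F2 2 g"
proof (rule F2_lower)
  fix x :: real assume x: "0 < x" "x < 1"
  have e: "(1+x) powr 2 + (1-x) powr 2 = 2 * (1 + x^2)" using x by (simp add: power2_eq_square algebra_simps)
  have "log 2 (2 * (1 + x^2)) = 1 + log 2 (1 + x^2)" proof -
    have "0 < 1 + x^2" by (simp add: add_pos_nonneg)
    thus ?thesis by (subst log_mult) auto
  qed
  hence "log 2 ((1+x) powr 2 + (1-x) powr 2) - 2 * g * log 2 x - 1 = (ln (1 + x^2) - g * ln (x^2))/ln 2"
    unfolding e using x by (simp add: log_def ln_realpow field_simps)
  moreover have "Hn g \<le> ln (1 + x^2) - g * ln (x^2)" using gibbs2[OF g, of "x^2"] x by simp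
  ultimately show "Hn g / ln 2 \<le> log 2 ((1+x) powr 2 + (1-x) powr 2) - 2 * g * log 2 x - 1"
    by (simp add: divide_right_mono)
qed

lemma F2_main:
  fixes g :: real and m :: nat
  assumes g: "0 < g" "g < 1/2" and m: "m \<ge> 2"
  shows "F2 (real (m + 1)) g < F2 2 g + F2 (real m) g"
proof -
  have g1: "0 < g" "g < 1" using g by auto
  have scp: "0 < sc g" "sc g < 1" "sc g \<le> 1 - 2*g" using sc_props[OF g] by auto
  define s0 where "s0 = 1 - 2*g"
  have s0: "0 < s0" "s0 < 1" using g unfolding s0_def by auto
  have L: "0 < ln (2::real)" by simp
  define Gm1 where "Gm1 = ln 2 * F2 (real (m+1)) g - real (m+1) * Hn g + ln 2"
  have G: "Gm1 \<le> KK g (m+1) t" if t: "0 < t" "t < 1" for t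
  proof -
    define x where "x = (1-t)/(1+t)"
    have x: "0 < x" "x < 1" unfolding x_def using t by auto
    have "(1-x)/(1+x) = t" unfolding x_def using t by (simp add: field_simps)
    hence "F2 (real (m+1)) g \<le> (KK g (m+1) t + real (m+1) * Hn g - ln 2)/ln 2"
      using F2_upper[OF g1 x, of "m+1"] by simp
    thus ?thesis unfolding Gm1_def using L by (simp add: field_simps)
  qed
  have KKsc: "ln (1 + sc g ^ (m+1)) \<le> KK g (m+1) s" if s: "0 < s" "s < 1" for s
  proof (cases "sc g \<le> s")
    case True
    have "sc g ^ (m+1) \<le> s^(m+1)" using True scp by (intro power_mono) auto
    moreover have "0 < 1 + sc g ^ (m+1)" "0 < 1 + s ^ (m+1)" using scp s by (auto intro: add_pos_nonneg)
    ultimately have "ln (1 + sc g ^ (m+1)) \<le> ln (1 + s^(m+1))" by (simp only: ln_le_cancel_iff)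
    thus ?thesis using KK_ge[OF g1 s, of "m+1"] by linarith
  next
    case False
    have "KK g (m+1) (sc g) \<le> KK g (m+1) s" using KK_mono[OF g, of "m+1" s] m s False by auto
    moreover have "ln (1 + sc g ^ (m+1)) \<le> KK g (m+1) (sc g)" using KK_ge[OF g1 scp(1,2)] by blast
    ultimately show ?thesis by linarith
  qed
  have Glow: "ln (1 + sc g ^ (m+1)) \<le> Gm1"
  proof -
    have "(ln (1 + sc g ^ (m+1)) + real (m+1) * Hn g - ln 2)/ln 2 \<le> F2 (real (m+1)) g"
    proof (rule F2_lower)
      fix x :: real assume x: "0 < x" "x < 1"
      have s: "0 < (1-x)/(1+x)" "(1-x)/(1+x) < 1" using x by auto
      show "(ln (1 + sc g ^ (m+1)) + real (m+1) * Hn g - ln 2)/ln 2 \<le>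
          log 2 ((1+x) powr real (m+1) + (1-x) powr real (m+1)) - real (m+1) * g * log 2 x - 1"
        unfolding val_eq[OF g1 x] using KKsc[OF s] by (intro divide_right_mono) auto
    qed
    thus ?thesis unfolding Gm1_def using L by (simp add: field_simps)
  qed
  obtain N where N: "s0^N < sc g ^ (m+1)" using real_arch_pow_inv[of "sc g ^ (m+1)" s0] scp s0 by auto
  define M where "M = N + m + 2"
  have MM: "m + 2 \<le> M" unfolding M_def by simp
  have "s0^M \<le> s0^N" unfolding M_def using s0 by (intro power_decreasing) auto
  hence "s0^M < sc g ^ (m+1)" using N by linarith
  moreover have "0 < 1 + sc g ^ (m+1)" "0 < 1 + s0 ^ M" using scp s0 by (auto intro: add_pos_nonneg)
  ultimately have cM: "ln (1 + s0^M) < ln (1 + sc g ^ (m+1))" by (simp only: ln_less_cancel_iff)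
  define l where "l = 1/(real M - real m)"
  have l: "0 < l" "l < 1" unfolding l_def using MM by (auto simp: field_simps)
  define c where "c = (Gm1 - l * ln (1 + s0^M))/(1-l)"
  have Kc: "c \<le> KK g m s" if s: "sc g \<le> s" "s < 1" for s
  proof -
    have "Gm1 \<le> (1-l) * KK g m s + l * ln (1 + s0^M)"
      using step[OF g m MM G s] unfolding l_def s0_def by blast
    thus ?thesis unfolding c_def using l by (simp add: pos_divide_le_eq algebra_simps)
  qed
  have Kc2: "c \<le> KK g m s" if s: "0 < s" "s < 1" for s
  proof (cases "sc g \<le> s")
    case True thus ?thesis using Kc s by auto
  next
    case False
    have "KK g m (sc g) \<le> KK g m s" using KK_mono[OF g m, of s] s False by auto
    moreover have "c \<le> KK g m (sc g)" using Kc[of "sc g"] scp by auto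
    ultimately show ?thesis by linarith
  qed
  have Fm: "(c + real m * Hn g - ln 2)/ln 2 \<le> F2 (real m) g"
  proof (rule F2_lower)
    fix x :: real assume x: "0 < x" "x < 1"
    have s: "0 < (1-x)/(1+x)" "(1-x)/(1+x) < 1" using x by auto
    show "(c + real m * Hn g - ln 2)/ln 2 \<le>
        log 2 ((1+x) powr real m + (1-x) powr real m) - real m * g * log 2 x - 1"
      unfolding val_eq[OF g1 x] using Kc2[OF s] by (intro divide_right_mono) auto
  qed
  have F2two: "Hn g / ln 2 \<le> F2 2 g" by (rule F2_two[OF g1])
  have "l * ln (1 + s0^M) < l * Gm1" using cM Glow l by simp
  hence cG: "Gm1 < c" unfolding c_def using l by (simp add: pos_less_divide_eq algebra_simps)
  have "F2 (real (m+1)) g = (Gm1 + real (m+1) * Hn g - ln 2)/ln 2" unfolding Gm1_def using L by (simp add: field_simps)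
  also have "\<dots> < (c + real (m+1) * Hn g - ln 2)/ln 2" using cG L by (simp add: divide_strict_right_mono)
  also have "\<dots> = Hn g / ln 2 + (c + real m * Hn g - ln 2)/ln 2" by (simp add: field_simps)
  also have "\<dots> \<le> F2 2 g + F2 (real m) g" using Fm F2two by linarith
  finally show ?thesis .
qed

lemma Pow1: "Pow {..<1::nat} = {{}, {0}}"
proof -
  have "{..<1::nat} = {0}" by auto
  thus ?thesis by (simp add: Pow_insert insert_commute)
qed

lemma entropy1:
  assumes "feasible 1 g d Q"
  shows "entropy_distr 1 Q = bin_entropy d"
proof -
  have odd: "{S\<in>Pow {..<1::nat}. odd (card S)} = {{0}}" unfolding Pow1 by auto
  have d: "Q {0} = d" using assms unfolding feasible_def odd by simp
  have t: "Q {} + Q {0} = 1" using assms unfolding feasible_def is_distr_def Pow1 by simp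
  have "entropy_distr 1 Q = - (xlogx (Q {}) + xlogx (Q {0}))" unfolding entropy_distr_def Pow1 by simp
  also have "Q {} = 1 - d" using d t by simp
  finally show ?thesis unfolding bin_entropy_def d by simp
qed

lemma F3_le0: "F3 1 g d \<le> 0"
proof (cases "\<exists>Q. feasible 1 g d Q")
  case True
  have "Hstar 1 g d \<le> bin_entropy d"
    unfolding Hstar_def
  proof (rule cSup_least)
    show "entropy_distr 1 ` {Q. feasible 1 g d Q} \<noteq> {}" using True by auto
  next
    fix y assume "y \<in> entropy_distr 1 ` {Q. feasible 1 g d Q}"
    then obtain Q where "feasible 1 g d Q" "y = entropy_distr 1 Q" by blast
    thus "y \<le> bin_entropy d" using entropy1 by simp
  qed
  thus ?thesis using True unfolding F3_def by simp
next
  case False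
  hence "F3 1 g d = -\<infinity>" unfolding F3_def by (simp only: if_False)
  thus ?thesis by simp
qed

theorem mainTheorem18:
  fixes g d :: real and m :: nat
  assumes "0 < g" "g < 1/2" "0 \<le> d" "d \<le> 1" "m \<ge> 2"
  shows "F3 1 g d + ereal (F2 (real (m + 1)) g) < ereal (F2 2 g + F2 (real m) g)"
proof -
  have main: "F2 (real (m + 1)) g < F2 2 g + F2 (real m) g" using F2_main assms by blast
  have "F3 1 g d + ereal (F2 (real (m + 1)) g) \<le> 0 + ereal (F2 (real (m + 1)) g)"
    using F3_le0 by (intro add_right_mono) auto
  also have "\<dots> < ereal (F2 2 g + F2 (real m) g)" using main by simp
  finally show ?thesis .
qed

end
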